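(* Consider the infinite-dimensional Poisson manifold with coordinates $p_1,p_2,p_3,\dots,u_1,u_2,u_3,\dots$ and Poisson bracket satisfying $\{p_i,p_k\}=0$, $\{u_i,u_k\}=0$, $\{u_i,p_k\}=J_{ki}$ ($i,k\ge1$), where $J_{ki}$ are functions of the coordinates. Let $p^*_n=P_n(-p_1,-\tfrac12p_2,-\tfrac13p_3,\dots)$ for $n\ge1$, where the Schur polynomials $P_n$ are defined by $\exp\big(\sum_{n\ge1}z^nt_n\big)=\sum_{m\ge0}z^mP_m(t_1,t_2,\dots)$, and let $J^*_{ki}:=\{u_i,p^*_k\}$ denote the Poisson tensor in the coordinates $(p^*,u)$. Let $I(\Gamma_\infty)$ be the ideal generated by $h^*_n=p^*_n-u_{n-1}$, $n=2,3,4,\dots$ (the family of ideals of the family of normal rational curves of the big cell). If $$\big(J^*_{i,k-1}-J^*_{k,i-1}\big)\big|_{\Gamma_\infty}=0\qquad\text{for all } i,k=2,3,4,\dots,$$ i.e. these functions lie in $I(\Gamma_\infty)$, then $I(\Gamma_\infty)$ is a Poisson ideal: $\{I(\Gamma_\infty),I(\Gamma_\infty)\}\subset I(\Gamma_\infty)$.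
   Context: Here $p_1,p_2,\dots$ play the role of the elements $p_i=z^i+\sum_{k\ge1}H^i_kz^{-k}$ of a point of the big cell closed under multiplication, $u_k=H^1_k$, and the family of normal rational curves is given by the relations $p_2=p_1^2-2u_1$, $p_3=p_1^3-3u_1p_1-3u_2$, $\dots$, which are equivalent to $p^*_n=u_{n-1}$, $n\ge2$; $\Gamma_\infty$ denotes this family (zero set of the ideal). A Poisson ideal is an ideal closed under the Poisson bracket. *)

theory Defs
  imports Complex_Main
begin

definition poisson_bracket :: "('a::{real_algebra_1,comm_ring_1} \<Rightarrow> 'a \<Rightarrow> 'a) \<Rightarrow> bool" where
  "poisson_bracket B \<longleftrightarrow>
     (\<forall>a b c. B (a + b) c = B a c + B b c) \<and>
     (\<forall>r a c. B (r *\<^sub>R a) c = r *\<^sub>R B a c) \<and>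
     (\<forall>a b. B a b = - B b a) \<and>
     (\<forall>a b c. B a (b * c) = B a b * c + b * B a c) \<and>
     (\<forall>a b c. B a (B b c) + B b (B c a) + B c (B a b) = 0)"

text \<open>Schur polynomials, as the coefficient of z^m in
  exp(sum_{n>=1} z^n t_n) = sum_j (sum_n z^n t_n)^j / j!.\<close>
definition schur :: "nat \<Rightarrow> (nat \<Rightarrow> 'a::{real_algebra_1,comm_ring_1}) \<Rightarrow> 'a" where
  "schur m t = (\<Sum>j\<le>m. (1 / fact j) *\<^sub>R
      (\<Sum>ns\<in>{ns. length ns = j \<and> (\<forall>n\<in>set ns. 1 \<le> n) \<and> sum_list ns = m}.
          prod_list (map t ns)))"

definition pstar :: "(nat \<Rightarrow> 'a::{real_algebra_1,comm_ring_1}) \<Rightarrow> nat \<Rightarrow> 'a" where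
  "pstar p n = schur n (\<lambda>k. - ((1 / real k) *\<^sub>R p k))"

definition gen_ideal :: "'a::comm_ring_1 set \<Rightarrow> 'a set" where
  "gen_ideal G = {x. \<exists>F c. finite F \<and> F \<subseteq> G \<and> x = (\<Sum>g\<in>F. c g * g)}"

definition I_Gamma :: "(nat \<Rightarrow> 'a::{real_algebra_1,comm_ring_1}) \<Rightarrow> (nat \<Rightarrow> 'a) \<Rightarrow> 'a set" where
  "I_Gamma p u = gen_ideal {pstar p n - u (n - 1) | n. n \<ge> 2}"

end

theory Submission
  imports Defs
begin

locale deriv_like =
  fixes f :: "'a::{real_algebra_1,comm_ring_1} \<Rightarrow> 'a"
  assumes add: "\<And>a b. f (a + b) = f a + f b"
    and scal: "\<And>r a. f (r *\<^sub>R a) = r *\<^sub>R f a"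
    and mult: "\<And>a b. f (a * b) = f a * b + a * f b"
begin

lemma zero: "f 0 = 0"
  using add[of 0 0] by simp

lemma one: "f 1 = 0"
  using mult[of 1 1] by simp

lemma neg: "f (- a) = - f a"
proof -
  have "f a + f (- a) = 0" using add[of a "- a"] zero by simp
  then show ?thesis by (simp only: add_eq_0_iff)
qed

lemma sum: "f (sum g A) = (\<Sum>x\<in>A. f (g x))"
proof (cases "finite A")
  case True
  then show ?thesis by (induction A rule: finite_induct) (simp_all add: zero add)
next
  case False
  then show ?thesis by (simp add: zero)
qed

lemma prod_list: "(\<And>n. f (t n) = 0) \<Longrightarrow> f (prod_list (map t ns)) = 0"
  by (induction ns) (simp_all add: one mult)

lemma pstar0:
  assumes "\<And>k. 1 \<le> k \<Longrightarrow> f (p k) = 0"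
  shows "f (pstar p n) = 0"
proof -
  have t: "f (- ((1 / real k) *\<^sub>R p k)) = 0" for k
  proof (cases "k = 0")
    case True then show ?thesis by (simp add: neg scal zero)
  next
    case False then show ?thesis using assms[of k] by (simp add: neg scal)
  qed
  show ?thesis unfolding pstar_def schur_def
    by (simp add: sum scal prod_list[OF t])
qed

end

lemma pb_props:
  assumes "poisson_bracket B"
  shows "deriv_like (B a)" "deriv_like (\<lambda>x. B x c)"
    "B a b = - B b a"
proof -
  have P: "\<And>a b c. B (a + b) c = B a c + B b c"
     "\<And>r a c. B (r *\<^sub>R a) c = r *\<^sub>R B a c"
     "\<And>a b. B a b = - B b a"
     "\<And>a b c. B a (b * c) = B a b * c + b * B a c"
    using assms unfolding poisson_bracket_def by blast+
  show "B a b = - B b a" by (rule P(3))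
  show "deriv_like (\<lambda>x. B x c)"
  proof
    fix a b show "B (a + b) c = B a c + B b c" by (rule P(1))
  next
    fix r a show "B (r *\<^sub>R a) c = r *\<^sub>R B a c" by (rule P(2))
  next
    fix a b show "B (a * b) c = B a c * b + a * B b c"
      using P(3)[of "a*b" c] P(4)[of c a b] P(3)[of c a] P(3)[of c b]
      by (simp add: algebra_simps)
  qed
  show "deriv_like (B a)"
  proof
    fix x y show "B a (x + y) = B a x + B a y"
      using P(3)[of a "x+y"] P(1)[of x y a] P(3)[of x a] P(3)[of y a] by simp
  next
    fix r x show "B a (r *\<^sub>R x) = r *\<^sub>R B a x"
      using P(3)[of a "r *\<^sub>R x"] P(2)[of r x a] P(3)[of x a] by simp
  next
    fix x y show "B a (x * y) = B a x * y + x * B a y" by (rule P(4))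
  qed
qed

lemma gen_ideal_zero: "0 \<in> gen_ideal G"
  unfolding gen_ideal_def by (intro CollectI exI[of _ "{}"] exI[of _ "\<lambda>_. 0"]) simp

lemma gen_ideal_gen: "g \<in> G \<Longrightarrow> g \<in> gen_ideal G"
  unfolding gen_ideal_def
  by (intro CollectI exI[of _ "{g}"] exI[of _ "\<lambda>_. 1"]) simp

lemma gen_ideal_add:
  assumes "x \<in> gen_ideal G" "y \<in> gen_ideal G"
  shows "x + y \<in> gen_ideal G"
proof -
  obtain F1 c1 where 1: "finite F1" "F1 \<subseteq> G" "x = (\<Sum>g\<in>F1. c1 g * g)"
    using assms(1) unfolding gen_ideal_def by blast
  obtain F2 c2 where 2: "finite F2" "F2 \<subseteq> G" "y = (\<Sum>g\<in>F2. c2 g * g)"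
    using assms(2) unfolding gen_ideal_def by blast
  define c where "c g = (if g \<in> F1 then c1 g else 0) + (if g \<in> F2 then c2 g else 0)" for g
  have a: "(\<Sum>g\<in>F1\<union>F2. (if g \<in> F1 then c1 g else 0) * g) = (\<Sum>g\<in>F1. c1 g * g)"
    by (rule trans[OF sum.mono_neutral_right[of "F1\<union>F2" F1]]) (use 1 2 in auto)
  have b: "(\<Sum>g\<in>F1\<union>F2. (if g \<in> F2 then c2 g else 0) * g) = (\<Sum>g\<in>F2. c2 g * g)"
    by (rule trans[OF sum.mono_neutral_right[of "F1\<union>F2" F2]]) (use 1 2 in auto)
  have "x + y = (\<Sum>g\<in>F1\<union>F2. c g * g)"
    unfolding c_def distrib_right sum.distrib a b 1(3) 2(3) ..
  moreover have "finite (F1 \<union> F2)" "F1 \<union> F2 \<subseteq> G" using 1 2 by auto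
  ultimately show ?thesis unfolding gen_ideal_def by (intro CollectI exI[of _ "F1 \<union> F2"] exI[of _ c]) simp
qed

lemma gen_ideal_mult:
  assumes "x \<in> gen_ideal G"
  shows "a * x \<in> gen_ideal G"
proof -
  obtain F c where 1: "finite F" "F \<subseteq> G" "x = (\<Sum>g\<in>F. c g * g)"
    using assms unfolding gen_ideal_def by blast
  have "a * x = (\<Sum>g\<in>F. (a * c g) * g)"
    unfolding 1(3) sum_distrib_left by (simp add: mult.assoc)
  then show ?thesis unfolding gen_ideal_def using 1 by (intro CollectI exI[of _ F] exI[of _ "\<lambda>g. a * c g"]) simp
qed

lemma gen_ideal_sum:
  "(\<And>g. g \<in> F \<Longrightarrow> h g \<in> gen_ideal G) \<Longrightarrow> sum h F \<in> gen_ideal G"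
proof (cases "finite F")
  case True
  then show "(\<And>g. g \<in> F \<Longrightarrow> h g \<in> gen_ideal G) \<Longrightarrow> ?thesis"
    by (induction F rule: finite_induct) (simp_all add: gen_ideal_zero gen_ideal_add)
qed (simp add: gen_ideal_zero)

theorem proposition5:
  fixes B :: "'a::{real_algebra_1,comm_ring_1} \<Rightarrow> 'a \<Rightarrow> 'a"
    and p u :: "nat \<Rightarrow> 'a"
  assumes "poisson_bracket B"
    and "\<And>i k. 1 \<le> i \<Longrightarrow> 1 \<le> k \<Longrightarrow> B (p i) (p k) = 0"
    and "\<And>i k. 1 \<le> i \<Longrightarrow> 1 \<le> k \<Longrightarrow> B (u i) (u k) = 0"
    and "\<And>i k. 2 \<le> i \<Longrightarrow> 2 \<le> k \<Longrightarrow>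
           B (u (k - 1)) (pstar p i) - B (u (i - 1)) (pstar p k) \<in> I_Gamma p u"
  shows "\<forall>a\<in>I_Gamma p u. \<forall>b\<in>I_Gamma p u. B a b \<in> I_Gamma p u"
proof -
  define G where "G = {pstar p n - u (n - 1) | n. n \<ge> 2}"
  have IG: "I_Gamma p u = gen_ideal G" unfolding I_Gamma_def G_def ..
  note D1 = pb_props(1)[OF assms(1)] and D2 = pb_props(2)[OF assms(1)]
    and AS = pb_props(3)[OF assms(1)]
  have pp: "B (pstar p i) (pstar p k) = 0" for i k
  proof -
    have "B (pstar p i) (p m) = 0" if "1 \<le> m" for m
      using deriv_like.pstar0[OF D2[of "p m"], of p i] assms(2) that by blast
    then show ?thesis using deriv_like.pstar0[OF D1[of "pstar p i"], of p k] by blast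
  qed
  have gens: "B g h \<in> gen_ideal G" if "g \<in> G" "h \<in> G" for g h
  proof -
    have "\<exists>n. g = pstar p n - u (n - 1) \<and> 2 \<le> n" using that(1) unfolding G_def mem_Collect_eq .
    then obtain i where i0: "g = pstar p i - u (i - 1) \<and> 2 \<le> i" by (elim exE) 
    have i: "i \<ge> 2" "g = pstar p i - u (i - 1)" using i0 by simp_all
    have "\<exists>n. h = pstar p n - u (n - 1) \<and> 2 \<le> n" using that(2) unfolding G_def mem_Collect_eq .
    then obtain k where k0: "h = pstar p k - u (k - 1) \<and> 2 \<le> k" by (elim exE) 
    have k: "k \<ge> 2" "h = pstar p k - u (k - 1)" using k0 by simp_all
    have "B g h = B (pstar p i) (pstar p k) - B (pstar p i) (u (k - 1))
        - B (u (i - 1)) (pstar p k) + B (u (i - 1)) (u (k - 1))"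
      unfolding i(2) k(2) diff_conv_add_uminus
        deriv_like.add[OF D2] deriv_like.neg[OF D2] deriv_like.add[OF D1] deriv_like.neg[OF D1]
      by (simp add: algebra_simps)
    also have "\<dots> = B (u (k - 1)) (pstar p i) - B (u (i - 1)) (pstar p k)"
      using pp assms(3)[of "i - 1" "k - 1"] i(1) k(1) AS[of "pstar p i" "u (k - 1)"] by simp
    finally show ?thesis using assms(4)[OF i(1) k(1)] IG by simp
  qed
  have step1: "B a h \<in> gen_ideal G" if aI: "a \<in> gen_ideal G" and hG: "h \<in> G" for a h
  proof -
    obtain F c where 1: "finite F" "F \<subseteq> G" "a = (\<Sum>g\<in>F. c g * g)"
      using aI unfolding gen_ideal_def mem_Collect_eq by (elim exE conjE)
    have "B a h = (\<Sum>g\<in>F. B (c g * g) h)"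
      unfolding 1(3) by (rule deriv_like.sum[OF D2[of h]])
    also have "\<dots> \<in> gen_ideal G"
    proof (rule gen_ideal_sum)
      fix g assume "g \<in> F"
      then have g: "g \<in> G" using 1 by blast
      have "B (c g * g) h = B (c g) h * g + c g * B g h"
        by (rule deriv_like.mult[OF D2[of h]])
      then show "B (c g * g) h \<in> gen_ideal G"
        using gen_ideal_add[OF gen_ideal_mult[OF gen_ideal_gen[OF g]] gen_ideal_mult[OF gens[OF g hG]]]
        by simp
    qed
    finally show ?thesis .
  qed
  show ?thesis unfolding IG
  proof (intro ballI)
    fix a b assume a: "a \<in> gen_ideal G" and b: "b \<in> gen_ideal G"
    obtain F d where 1: "finite F" "F \<subseteq> G" "b = (\<Sum>h\<in>F. d h * h)"
      using b unfolding gen_ideal_def mem_Collect_eq by (elim exE conjE)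
    have "B a b = (\<Sum>h\<in>F. B a (d h * h))"
      unfolding 1(3) by (rule deriv_like.sum[OF D1[of a]])
    also have "\<dots> \<in> gen_ideal G"
    proof (rule gen_ideal_sum)
      fix h assume "h \<in> F"
      then have h: "h \<in> G" using 1 by blast
      have "B a (d h * h) = B a (d h) * h + d h * B a h"
        by (rule deriv_like.mult[OF D1[of a]])
      then show "B a (d h * h) \<in> gen_ideal G"
        using gen_ideal_add[OF gen_ideal_mult[OF gen_ideal_gen[OF h]] gen_ideal_mult[OF step1[OF a h]]]
        by simp
    qed
    finally show "B a b \<in> gen_ideal G" .
  qed
qed

end
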